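(* Let $\Gamma$ be a compact abelian group (written multiplicatively) such that for every $a\in\mathbb{N}^{\times}$ the subgroup $\omega_a(\Gamma)$ has finite index in $\Gamma$, the kernel $\ker\omega_a$ is finite, and $|\ker\omega_{ab}|=|\ker\omega_a|\cdot|\ker\omega_b|$ for all $a,b\in\mathbb{N}^{\times}$, where $\omega_a(g)=g^a$. For $a\in\mathbb{N}^{\times}$ let $\Gamma_a:=\{(a,g):g\in\Gamma\}$, and give $\Lambda_\Gamma:=\bigcup_{a\in\mathbb{N}^{\times}}\Gamma_a$ the topology in which each $\Gamma_a$ is a compact open copy of $\Gamma$. Define $r,s:\Lambda_\Gamma\to\Lambda^1:=\Gamma$ and $d:\Lambda_\Gamma\to\mathbb{N}^{\times}$ by $r(a,g)=g$, $s(a,g)=g^a$, $d(a,g)=a$, and define composition by $(a,g)(b,g^a):=(ab,g)$ (the element $(1,g)$ being identified with the object $g$). Then $\Lambda=(\Gamma,\Lambda_\Gamma,r,s,d)$ is a topological $\mathbb{N}^{\times}$-graph, and it is row-finite and has no sources.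
   Context: $\mathbb{N}^{\times}=\{a\in\mathbb{Z}:a>0\}$ is the multiplicative semigroup of positive integers. A topological $\mathbb{N}^{\times}$-graph (a topological higher-rank graph in Yamashita's sense, with degree semigroup $\mathbb{N}^{\times}\cong\mathbb{N}^\infty$ written multiplicatively) is a small category $\Lambda$ whose object set $\Lambda^1$ and morphism set are topological spaces (locally compact Hausdorff), together with a functor $d$ (the degree) from $\Lambda$ to $\mathbb{N}^{\times}$, such that: the range map $r$ is continuous, the source map $s$ is a local homeomorphism, $d$ is continuous, composition is continuous and open, and the factorisation property holds: if $d(\lambda)=ab$ then there are unique $\mu,\nu$ with $d(\mu)=a$, $d(\nu)=b$ and $\lambda=\mu\nu$. Write $\Lambda^a=d^{-1}(a)$. $\Lambda$ is row-finite with no sources if each $r|_{\Lambda^a}:\Lambda^a\to\Lambda^1$ is proper and surjective. *)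

theory Defs
  imports "HOL-Analysis.Analysis" "HOL-Algebra.Algebra"
begin

definition Nx :: "nat set" where "Nx = {a. 0 < a}"

definition local_homeo_map :: "'a topology \<Rightarrow> 'b topology \<Rightarrow> ('a \<Rightarrow> 'b) \<Rightarrow> bool" where
  "local_homeo_map Tx Ty f \<longleftrightarrow>
     f ` topspace Tx \<subseteq> topspace Ty \<and>
     (\<forall>x \<in> topspace Tx. \<exists>U. openin Tx U \<and> x \<in> U \<and> openin Ty (f ` U) \<and>
        homeomorphic_map (subtopology Tx U) (subtopology Ty (f ` U)) f)"

text \<open>The category is given by its space of
  morphisms (topology \<open>T\<close>); objects are identified with the identity morphisms,
  which are exactly the morphisms of degree 1, i.e. \<open>\<Lambda>\<^sup>1\<close>.  Composition
  \<open>cmp \<lambda> \<mu>\<close> (meaning \<open>\<lambda>\<mu>\<close>) is only relevant on composable pairs \<open>s \<lambda> = r \<mu>\<close>.\<close>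

definition obj_space :: "'m topology \<Rightarrow> ('m \<Rightarrow> nat) \<Rightarrow> 'm set" where
  "obj_space T d = {v \<in> topspace T. d v = 1}"

definition composable :: "'m topology \<Rightarrow> ('m \<Rightarrow> 'm) \<Rightarrow> ('m \<Rightarrow> 'm) \<Rightarrow> ('m \<times> 'm) set" where
  "composable T r s = {(l, m). l \<in> topspace T \<and> m \<in> topspace T \<and> s l = r m}"

definition topological_Nx_graph ::
  "'m topology \<Rightarrow> ('m \<Rightarrow> 'm) \<Rightarrow> ('m \<Rightarrow> 'm) \<Rightarrow> ('m \<Rightarrow> 'm \<Rightarrow> 'm) \<Rightarrow> ('m \<Rightarrow> nat) \<Rightarrow> bool" where
  "topological_Nx_graph T r s cmp d \<longleftrightarrow>
    (let L = topspace T; Ob = obj_space T d; C = composable T r s in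
     \<comment> \<open>small category with object set \<open>Ob\<close> (identities)\<close>
     (\<forall>l \<in> L. r l \<in> Ob \<and> s l \<in> Ob) \<and>
     (\<forall>v \<in> Ob. r v = v \<and> s v = v) \<and>
     (\<forall>(l, m) \<in> C. cmp l m \<in> L \<and> r (cmp l m) = r l \<and> s (cmp l m) = s m) \<and>
     (\<forall>l \<in> L. cmp (r l) l = l \<and> cmp l (s l) = l) \<and>
     (\<forall>l \<in> L. \<forall>m \<in> L. \<forall>n \<in> L. s l = r m \<and> s m = r n \<longrightarrow>
          cmp (cmp l m) n = cmp l (cmp m n)) \<and>
     \<comment> \<open>degree functor into \<open>\<nat>\<^sup>\<times>\<close>\<close>
     (\<forall>l \<in> L. d l \<in> Nx) \<and>
     (\<forall>(l, m) \<in> C. d (cmp l m) = d l * d m) \<and>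
     \<comment> \<open>topology\<close>
     Hausdorff_space T \<and> locally_compact_space T \<and>
     Hausdorff_space (subtopology T Ob) \<and> locally_compact_space (subtopology T Ob) \<and>
     continuous_map T (subtopology T Ob) r \<and>
     local_homeo_map T (subtopology T Ob) s \<and>
     continuous_map T (discrete_topology Nx) d \<and>
     continuous_map (subtopology (prod_topology T T) C) T (\<lambda>(l, m). cmp l m) \<and>
     open_map (subtopology (prod_topology T T) C) T (\<lambda>(l, m). cmp l m) \<and>
     \<comment> \<open>unique factorisation\<close>
     (\<forall>l \<in> L. \<forall>a \<in> Nx. \<forall>b \<in> Nx. d l = a * b \<longrightarrow>
        (\<exists>!(m, n). (m, n) \<in> C \<and> d m = a \<and> d n = b \<and> l = cmp m n)))"

definition row_finite_no_sources ::
  "'m topology \<Rightarrow> ('m \<Rightarrow> 'm) \<Rightarrow> ('m \<Rightarrow> nat) \<Rightarrow> bool" where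
  "row_finite_no_sources T r d \<longleftrightarrow>
    (\<forall>a \<in> Nx. proper_map (subtopology T {l \<in> topspace T. d l = a})
                          (subtopology T (obj_space T d)) r \<and>
              r ` {l \<in> topspace T. d l = a} = obj_space T d)"

definition Lam_top :: "'g topology \<Rightarrow> (nat \<times> 'g) topology" where
  "Lam_top Tx = prod_topology (discrete_topology Nx) Tx"

definition Lam_r :: "nat \<times> 'g \<Rightarrow> nat \<times> 'g" where
  "Lam_r = (\<lambda>(a, g). (1, g))"

definition Lam_s :: "('g, 'b) monoid_scheme \<Rightarrow> nat \<times> 'g \<Rightarrow> nat \<times> 'g" where
  "Lam_s G = (\<lambda>(a, g). (1, g [^]\<^bsub>G\<^esub> a))"

definition Lam_d :: "nat \<times> 'g \<Rightarrow> nat" where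
  "Lam_d = fst"

definition Lam_comp :: "nat \<times> 'g \<Rightarrow> nat \<times> 'g \<Rightarrow> nat \<times> 'g" where
  "Lam_comp = (\<lambda>(a, g) (b, h). (a * b, g))"

definition pow_ker :: "('g, 'b) monoid_scheme \<Rightarrow> nat \<Rightarrow> 'g set" where
  "pow_ker G a = {g \<in> carrier G. g [^]\<^bsub>G\<^esub> a = \<one>\<^bsub>G\<^esub>}"

definition pow_image :: "('g, 'b) monoid_scheme \<Rightarrow> nat \<Rightarrow> 'g set" where
  "pow_image G a = (\<lambda>g. g [^]\<^bsub>G\<^esub> a) ` carrier G"

end

theory Submission
  imports Defs
begin

lemma topspace_Lam: "topspace (Lam_top XX) = Nx \<times> topspace XX"
  by (simp add: Lam_top_def)

lemma openin_Lam:
  "openin (Lam_top XX) S \<longleftrightarrow> S \<subseteq> Nx \<times> topspace XX \<and> (\<forall>a\<in>Nx. openin XX {g. (a,g) \<in> S})"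
proof
  assume S: "openin (Lam_top XX) S"
  have sub: "S \<subseteq> Nx \<times> topspace XX" using openin_subset[OF S] by (simp add: topspace_Lam)
  moreover have "openin XX {g. (a,g) \<in> S}" if "a \<in> Nx" for a
  proof -
    have c: "continuous_map XX (Lam_top XX) (\<lambda>g. (a,g))"
      unfolding Lam_top_def using that by (intro continuous_map_pairedI) auto
    have "openin XX {x \<in> topspace XX. (a,x) \<in> S}"
      using openin_continuous_map_preimage[OF c S] .
    moreover have "{x \<in> topspace XX. (a,x) \<in> S} = {g. (a,g) \<in> S}" using sub by auto
    ultimately show ?thesis by simp
  qed
  ultimately show "S \<subseteq> Nx \<times> topspace XX \<and> (\<forall>a\<in>Nx. openin XX {g. (a,g) \<in> S})" by blast
next
  assume H: "S \<subseteq> Nx \<times> topspace XX \<and> (\<forall>a\<in>Nx. openin XX {g. (a,g) \<in> S})"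
  have eq: "S = (\<Union>a\<in>Nx. {a} \<times> {g. (a,g) \<in> S})" using H by auto
  have "openin (Lam_top XX) ({a} \<times> {g. (a,g) \<in> S})" if "a \<in> Nx" for a
    unfolding Lam_top_def openin_prod_Times_iff using H that by auto
  then have "openin (Lam_top XX) (\<Union>a\<in>Nx. {a} \<times> {g. (a,g) \<in> S})" by (intro openin_Union) auto
  with eq show "openin (Lam_top XX) S" by simp
qed

lemma openin_Lam_Times: "a \<in> Nx \<Longrightarrow> openin XX W \<Longrightarrow> openin (Lam_top XX) ({a} \<times> W)"
  unfolding Lam_top_def openin_prod_Times_iff by auto

lemma cont_Lam:
  assumes "\<And>a. a \<in> Nx \<Longrightarrow> continuous_map XX Y (\<lambda>g. h (a,g))"
  shows "continuous_map (Lam_top XX) Y h"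
  unfolding continuous_map_def
proof (intro conjI allI impI)
  show "h \<in> topspace (Lam_top XX) \<rightarrow> topspace Y"
    using assms by (auto simp: topspace_Lam continuous_map_def)
  fix U assume U: "openin Y U"
  show "openin (Lam_top XX) {x \<in> topspace (Lam_top XX). h x \<in> U}"
    unfolding openin_Lam
  proof (intro conjI ballI)
    fix a assume a: "a \<in> Nx"
    have "openin XX {x \<in> topspace XX. h (a,x) \<in> U}"
      using openin_continuous_map_preimage[OF assms[OF a] U] .
    then show "openin XX {g. (a, g) \<in> {x \<in> topspace (Lam_top XX). h x \<in> U}}"
      using a by (simp add: topspace_Lam)
  qed (auto simp: topspace_Lam)
qed

locale tgrp = comm_group G for G :: "('g, 'b) monoid_scheme" (structure) +
  fixes Tx :: "'g topology"
  assumes top: "topspace Tx = carrier G"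
    and cpt: "compact_space Tx" and hd: "Hausdorff_space Tx"
    and cmul: "continuous_map (prod_topology Tx Tx) Tx (\<lambda>(x, y). x \<otimes> y)"
    and cinv: "continuous_map Tx Tx (\<lambda>x. inv x)"
    and fidx: "\<And>a. a \<in> Nx \<Longrightarrow> finite (rcosets (pow_image G a))"
    and fker: "\<And>a. a \<in> Nx \<Longrightarrow> finite (pow_ker G a)"
begin

lemma cont_mul2:
  assumes "continuous_map Y Tx f" "continuous_map Y Tx g"
  shows "continuous_map Y Tx (\<lambda>x. f x \<otimes> g x)"
proof -
  have "continuous_map Y Tx ((\<lambda>(x, y). x \<otimes> y) \<circ> (\<lambda>x. (f x, g x)))"
    by (intro continuous_map_compose[OF _ cmul] continuous_map_pairedI assms)
  then show ?thesis by (simp add: o_def)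
qed

lemma cont_pow: "continuous_map Tx Tx (\<lambda>x. x [^] (n::nat))"
proof (induction n)
  case 0
  then show ?case by (simp add: top)
next
  case (Suc n)
  then show ?case by (simp add: cont_mul2)
qed

lemma cont_rmul: "c \<in> carrier G \<Longrightarrow> continuous_map Tx Tx (\<lambda>x. x \<otimes> c)"
  by (intro cont_mul2) (auto simp: top)

lemma cont_div: "continuous_map (prod_topology Tx Tx) Tx (\<lambda>(x,y). x \<otimes> inv y)"
proof -
  have "continuous_map (prod_topology Tx Tx) Tx (\<lambda>z. fst z \<otimes> inv (snd z))"
    by (intro cont_mul2 continuous_map_compose[OF _ cinv, unfolded o_def] continuous_map_fst continuous_map_snd)
  then show ?thesis by (simp add: case_prod_unfold)
qed

lemma pow_mul: "x \<in> carrier G \<Longrightarrow> y \<in> carrier G \<Longrightarrow> x [^] (n::nat) \<otimes> y [^] n = (x \<otimes> y) [^] n"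
  by (simp add: pow_mult_distrib m_comm)

lemma closed_img: "closedin Tx S \<Longrightarrow> closedin Tx ((\<lambda>x. x [^] (n::nat)) ` S)"
proof -
  assume "closedin Tx S"
  then have "compactin Tx S" using closedin_compact_space cpt by blast
  then have "compactin Tx ((\<lambda>x. x [^] (n::nat)) ` S)" using image_compactin cont_pow by blast
  then show ?thesis using compactin_imp_closedin hd by blast
qed

lemma closed_I: "closedin Tx (pow_image G a)"
  unfolding pow_image_def by (metis closed_img closedin_topspace top)

lemma open_I:
  assumes a: "a \<in> Nx" shows "openin Tx (pow_image G a)"
proof -
  let ?I = "pow_image G a"
  have Isub: "?I \<subseteq> carrier G" by (auto simp: pow_image_def)
  have eq: "carrier G - ?I = \<Union> ((\<lambda>y. ?I #> y) ` (carrier G - ?I))"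
  proof
    show "carrier G - ?I \<subseteq> \<Union> ((\<lambda>y. ?I #> y) ` (carrier G - ?I))"
    proof
      fix y assume y: "y \<in> carrier G - ?I"
      have "\<one> \<in> ?I" unfolding pow_image_def by (rule image_eqI[of _ _ \<one>]) auto
      then have "y \<in> ?I #> y" using y by (force simp: r_coset_def)
      then show "y \<in> \<Union> ((\<lambda>y. ?I #> y) ` (carrier G - ?I))" using y by blast
    qed
    show "\<Union> ((\<lambda>y. ?I #> y) ` (carrier G - ?I)) \<subseteq> carrier G - ?I"
    proof
      fix x assume "x \<in> \<Union> ((\<lambda>y. ?I #> y) ` (carrier G - ?I))"
      then obtain y where y: "y \<in> carrier G" "y \<notin> ?I" and x: "x \<in> ?I #> y" by blast
      then obtain u where u: "u \<in> carrier G" "x = u [^] a \<otimes> y"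
        by (auto simp: r_coset_def pow_image_def)
      have xc: "x \<in> carrier G" using u y by simp
      show "x \<in> carrier G - ?I" proof (rule DiffI[OF xc], rule notI)
      assume "x \<in> ?I"
      then obtain v where v: "v \<in> carrier G" "x = v [^] a" by (auto simp: pow_image_def)
      have "y = inv (u [^] a) \<otimes> x" using u y by (simp add: m_assoc[symmetric])
      also have "\<dots> = (inv u) [^] a \<otimes> v [^] a" using u(1) v(1) by (simp add: nat_pow_inv v(2))
      also have "\<dots> = (inv u \<otimes> v) [^] a" using u(1) v(1) by (simp add: pow_mul)
      finally have "y \<in> ?I" using u v unfolding pow_image_def by blast
      with y show False by simp
    qed
    qed
  qed
  have fin: "finite ((\<lambda>y. ?I #> y) ` (carrier G - ?I))"
    by (rule finite_subset[OF _ fidx[OF a]]) (auto simp: RCOSETS_def)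
  have cl: "closedin Tx (?I #> y)" if "y \<in> carrier G" for y
  proof -
    have "?I #> y = {x \<in> topspace Tx. x \<otimes> inv y \<in> ?I}"
    proof safe
      fix x assume "x \<in> ?I #> y"
      then obtain h where "h \<in> ?I" "x = h \<otimes> y" by (auto simp: r_coset_def)
      then show "x \<in> topspace Tx" "x \<otimes> inv y \<in> ?I" using that Isub by (auto simp: top m_assoc)
    next
      fix x assume "x \<in> topspace Tx" "x \<otimes> inv y \<in> ?I"
      moreover have "x = (x \<otimes> inv y) \<otimes> y" using that \<open>x \<in> topspace Tx\<close> by (simp add: top m_assoc)
      ultimately show "x \<in> ?I #> y" by (auto simp: r_coset_def)
    qed
    then show ?thesis
      using closedin_continuous_map_preimage[OF cont_rmul closed_I] that by simp
  qed
  have "closedin Tx (carrier G - ?I)"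
    by (subst eq, rule closedin_Union) (use fin cl in auto)
  then have "openin Tx (topspace Tx - (carrier G - ?I))" by (simp add: openin_diff)
  moreover have "topspace Tx - (carrier G - ?I) = ?I" using Isub top by auto
  ultimately show ?thesis by simp
qed

lemma pow_open:
  assumes a: "a \<in> Nx" and W: "openin Tx W"
  shows "openin Tx ((\<lambda>x. x [^] a) ` W)"
proof -
  let ?f = "\<lambda>x. x [^] a" and ?I = "pow_image G a" and ?K = "pow_ker G a"
  have Wsub: "W \<subseteq> carrier G" using openin_subset[OF W] top by simp
  define WK where "WK = (\<Union>k\<in>?K. {x \<in> topspace Tx. x \<otimes> inv k \<in> W})"
  have WKo: "openin Tx WK" unfolding WK_def
  proof (rule openin_Union, clarify)
    fix k assume "k \<in> ?K"
    then have "inv k \<in> carrier G" by (simp add: pow_ker_def)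
    then show "openin Tx {x \<in> topspace Tx. x \<otimes> inv k \<in> W}"
      using W by (intro openin_continuous_map_preimage[OF cont_rmul])
  qed
  have eq: "?f ` W = ?I - ?f ` (carrier G - WK)"
  proof safe
    fix w assume w: "w \<in> W"
    with Wsub have wc: "w \<in> carrier G" by auto
    then show "w [^] a \<in> ?I" by (auto simp: pow_image_def)
    fix z assume z: "z \<in> carrier G" "z \<notin> WK" "w [^] a = z [^] a"
    let ?k = "inv w \<otimes> z"
    have "?k [^] a = inv w [^] a \<otimes> z [^] a" using wc z by (simp add: pow_mul)
    also have "\<dots> = inv (w [^] a) \<otimes> w [^] a" using wc z by (simp add: nat_pow_inv)
    also have "\<dots> = \<one>" using wc by simp
    finally have kK: "?k \<in> ?K" using wc z by (simp add: pow_ker_def)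
    have "z \<otimes> inv ?k = w" using wc z by (simp add: inv_mult_group m_assoc[symmetric])
    then have "z \<in> WK" using kK z w unfolding WK_def by (auto simp: top)
    with z show False by simp
  next
    fix y assume "y \<in> ?I" "y \<notin> ?f ` (carrier G - WK)"
    then obtain z where z: "z \<in> carrier G" "y = z [^] a" "z \<in> WK" by (auto simp: pow_image_def)
    then obtain k where k: "k \<in> ?K" "z \<otimes> inv k \<in> W" by (auto simp: WK_def)
    have kc: "k \<in> carrier G" "k [^] a = \<one>" using k by (auto simp: pow_ker_def)
    have "(z \<otimes> inv k) [^] a = z [^] a \<otimes> inv k [^] a" using z kc by (simp add: pow_mul)
    also have "\<dots> = z [^] a" using z kc by (simp add: nat_pow_inv)
    finally have "y = ?f (z \<otimes> inv k)" using z(2) by simp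
    then show "y \<in> ?f ` W" using k(2) by (rule image_eqI)
  qed
  have "closedin Tx (carrier G - WK)"
    using closedin_diff[OF closedin_topspace WKo] top by simp
  then have "closedin Tx (?f ` (carrier G - WK))" by (rule closed_img)
  then show ?thesis unfolding eq by (intro openin_diff open_I a)
qed

lemma inj_nbhd:
  assumes a: "a \<in> Nx" and g: "g \<in> carrier G"
  shows "\<exists>W. openin Tx W \<and> g \<in> W \<and> inj_on (\<lambda>x. x [^] a) W"
proof -
  let ?K = "pow_ker G a - {\<one>}"
  have "closedin Tx ?K"
  proof (rule closedin_Hausdorff_finite[OF hd])
    show "?K \<subseteq> topspace Tx" by (auto simp: top pow_ker_def)
    show "finite ?K" using fker[OF a] by simp
  qed
  then have O: "openin Tx (topspace Tx - ?K)" by (simp add: openin_diff)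
  define P where "P = {z \<in> topspace (prod_topology Tx Tx). (\<lambda>(x,y). x \<otimes> inv y) z \<in> topspace Tx - ?K}"
  have Po: "openin (prod_topology Tx Tx) P"
    unfolding P_def by (rule openin_continuous_map_preimage[OF cont_div O])
  have gg: "(g,g) \<in> P" using g by (simp add: P_def top)
  obtain U V where UV: "openin Tx U" "openin Tx V" "g \<in> U" "g \<in> V" "U \<times> V \<subseteq> P"
    using Po[unfolded openin_prod_topology_alt, rule_format, OF gg] by auto
  have "inj_on (\<lambda>x. x [^] a) (U \<inter> V)"
  proof (rule inj_onI)
    fix x y assume x: "x \<in> U \<inter> V" and y: "y \<in> U \<inter> V" and e: "x [^] a = y [^] a"
    have "(x, y) \<in> U \<times> V" using x y by simp
    then have "(x, y) \<in> P" using UV(5) by (rule subsetD[rotated])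
    then have xy: "x \<in> carrier G" "y \<in> carrier G" "x \<otimes> inv y \<notin> ?K" by (simp_all add: P_def top)
    have "(x \<otimes> inv y) [^] a = x [^] a \<otimes> inv y [^] a" using xy by (simp add: pow_mul)
    also have "\<dots> = \<one>" using xy e by (simp add: nat_pow_inv)
    finally have h1: "x \<otimes> inv y = \<one>" using xy by (simp add: pow_ker_def)
    have "x = (x \<otimes> inv y) \<otimes> y" using xy by (simp add: m_assoc)
    also have "\<dots> = \<one> \<otimes> y" by (simp only: h1)
    also have "\<dots> = y" using xy by simp
    finally show "x = y" .
  qed
  moreover have "openin Tx (U \<inter> V)" using UV(1,2) by (rule openin_Int)
  moreover have "g \<in> U \<inter> V" using UV(3,4) by simp
  ultimately show ?thesis by (intro exI[of _ "U \<inter> V"] conjI)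
qed

lemma Nx_mult: "a \<in> Nx \<Longrightarrow> b \<in> Nx \<Longrightarrow> a * b \<in> Nx" by (simp add: Nx_def)
lemma one_Nx: "1 \<in> Nx" by (simp add: Nx_def)

lemma topT: "topspace (Lam_top Tx) = Nx \<times> carrier G" by (simp add: topspace_Lam top)

lemma Ob_eq: "obj_space (Lam_top Tx) Lam_d = {1} \<times> carrier G"
  by (auto simp: obj_space_def topT Lam_d_def Nx_def)

lemma Ob_open: "openin (Lam_top Tx) ({1} \<times> carrier G)"
  using openin_Lam_Times[OF one_Nx openin_topspace[of Tx]] by (simp only: top)

lemma s_simp: "Lam_s G (a, g) = (1, g [^] a)" by (simp add: Lam_s_def)
lemma r_simp: "Lam_r (a, g) = (1, g)" by (simp add: Lam_r_def)
lemma c_simp: "Lam_comp (a, g) (b, h) = (a * b, g)" by (simp add: Lam_comp_def)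

lemma cont_into_Lam:
  "b \<in> Nx \<Longrightarrow> continuous_map Y Tx f \<Longrightarrow> continuous_map Y (Lam_top Tx) (\<lambda>x. (b, f x))"
  unfolding Lam_top_def by (intro continuous_map_pairedI) auto

lemma cont_s: "continuous_map (Lam_top Tx) (Lam_top Tx) (Lam_s G)"
proof (rule cont_Lam)
  fix a show "continuous_map Tx (Lam_top Tx) (\<lambda>g. Lam_s G (a,g))"
    unfolding s_simp by (rule cont_into_Lam[OF one_Nx cont_pow])
qed

lemma cont_r: "continuous_map (Lam_top Tx) (Lam_top Tx) Lam_r"
proof (rule cont_Lam)
  fix a show "continuous_map Tx (Lam_top Tx) (\<lambda>g. Lam_r (a,g))"
    unfolding r_simp by (rule cont_into_Lam[OF one_Nx continuous_map_id[unfolded id_def]])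
qed

lemma compact_slice: "a \<in> Nx \<Longrightarrow> compactin (Lam_top Tx) ({a} \<times> carrier G)"
proof -
  assume a: "a \<in> Nx"
  have "compactin Tx (topspace Tx)" using cpt by (simp add: compact_space_def)
  then have "compactin (Lam_top Tx) ((\<lambda>g. (a, g)) ` topspace Tx)"
    by (rule image_compactin) (rule cont_into_Lam[OF a continuous_map_id[unfolded id_def]])
  moreover have "(\<lambda>g. (a, g)) ` topspace Tx = {a} \<times> carrier G" by (auto simp: top)
  ultimately show ?thesis by simp
qed

lemma hausT: "Hausdorff_space (Lam_top Tx)"
  unfolding Lam_top_def Hausdorff_space_prod_topology using hd by simp

lemma lcT: "locally_compact_space (Lam_top Tx)"
  unfolding Lam_top_def locally_compact_space_prod_topology
  using compact_imp_locally_compact_space[OF cpt] locally_compact_space_discrete_topology by blast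

lemma s_image: "Lam_s G ` ({a} \<times> A) = {1} \<times> (\<lambda>x. x [^] a) ` A"
proof
  show "Lam_s G ` ({a} \<times> A) \<subseteq> {1} \<times> (\<lambda>x. x [^] a) ` A" by (auto simp: s_simp)
  show "{1} \<times> (\<lambda>x. x [^] a) ` A \<subseteq> Lam_s G ` ({a} \<times> A)"
  proof (rule subsetI)
    fix p :: "nat \<times> 'g" assume "p \<in> {1} \<times> (\<lambda>x. x [^] a) ` A"
    then obtain w where w: "w \<in> A" "p = (1, w [^] a)" by blast
    then have "p = Lam_s G (a, w)" by (simp add: s_simp)
    moreover have "(a, w) \<in> {a} \<times> A" using w by simp
    ultimately show "p \<in> Lam_s G ` ({a} \<times> A)" by (rule image_eqI)
  qed
qed

lemma local_homeo_s:
  "local_homeo_map (Lam_top Tx) (subtopology (Lam_top Tx) ({1} \<times> carrier G)) (Lam_s G)"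
  unfolding local_homeo_map_def
proof (intro conjI ballI)
  let ?T = "Lam_top Tx" and ?s = "Lam_s G" and ?Ob = "{1::nat} \<times> carrier G"
  show "?s ` topspace ?T \<subseteq> topspace (subtopology ?T ?Ob)"
    by (auto simp: topT s_simp Nx_def)
  fix x assume "x \<in> topspace ?T"
  then obtain a g where x: "x = (a, g)" and a: "a \<in> Nx" and g: "g \<in> carrier G" by (auto simp: topT)
  obtain W where W: "openin Tx W" "g \<in> W" "inj_on (\<lambda>x. x [^] a) W"
    using inj_nbhd[OF a g] by blast
  have Wc: "W \<subseteq> carrier G" using openin_subset[OF W(1)] top by simp
  let ?U = "{a} \<times> W"
  have Uo: "openin ?T ?U" by (rule openin_Lam_Times[OF a W(1)])
  have sU: "?s ` ?U = {1} \<times> (\<lambda>x. x [^] a) ` W" by (rule s_image)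
  have sUo: "openin ?T (?s ` ?U)" unfolding sU by (rule openin_Lam_Times[OF one_Nx pow_open[OF a W(1)]])
  have sUsub: "?s ` ?U \<subseteq> ?Ob" using Wc by (auto simp: s_simp)
  show "\<exists>U. openin ?T U \<and> x \<in> U \<and> openin (subtopology ?T ?Ob) (?s ` U) \<and>
        homeomorphic_map (subtopology ?T U) (subtopology (subtopology ?T ?Ob) (?s ` U)) ?s"
  proof (intro exI[of _ ?U] conjI)
    show "openin ?T ?U" by (rule Uo)
    show "x \<in> ?U" using x W(2) by simp
    show "openin (subtopology ?T ?Ob) (?s ` ?U)"
      using openin_open_subtopology[OF Ob_open] sUo sUsub by blast
    have eqsub: "subtopology (subtopology ?T ?Ob) (?s ` ?U) = subtopology ?T (?s ` ?U)"
      using sUsub by (simp add: subtopology_subtopology Int_absorb1)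
    have Usub: "?U \<subseteq> topspace ?T" using openin_subset[OF Uo] .
    have sUsubT: "?s ` ?U \<subseteq> topspace ?T" using openin_subset[OF sUo] .
    show "homeomorphic_map (subtopology ?T ?U) (subtopology (subtopology ?T ?Ob) (?s ` ?U)) ?s"
      unfolding eqsub
    proof (rule bijective_open_imp_homeomorphic_map)
      show "continuous_map (subtopology ?T ?U) (subtopology ?T (?s ` ?U)) ?s"
        by (intro continuous_map_into_subtopology continuous_map_from_subtopology cont_s) auto
      show "?s ` topspace (subtopology ?T ?U) = topspace (subtopology ?T (?s ` ?U))"
      proof -
        have "topspace ?T \<inter> ?U = ?U" using Usub by blast
        moreover have "topspace ?T \<inter> ?s ` ?U = ?s ` ?U" using sUsubT by blast
        ultimately show ?thesis by (simp only: topspace_subtopology)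
      qed
      show "inj_on ?s (topspace (subtopology ?T ?U))"
      proof (rule inj_onI)
        fix p q assume p: "p \<in> topspace (subtopology ?T ?U)" and q: "q \<in> topspace (subtopology ?T ?U)"
          and e: "?s p = ?s q"
        from p q obtain w1 w2 where w: "p = (a, w1)" "q = (a, w2)" "w1 \<in> W" "w2 \<in> W" by auto
        then have "w1 [^] a = w2 [^] a" using e by (simp add: s_simp)
        then have "w1 = w2" using inj_onD[OF W(3) _ w(3,4)] by blast
        then show "p = q" using w by simp
      qed
      show "open_map (subtopology ?T ?U) (subtopology ?T (?s ` ?U)) ?s"
        unfolding open_map_def
      proof (intro allI impI)
        fix S assume "openin (subtopology ?T ?U) S"
        then have S: "openin ?T S" "S \<subseteq> ?U" using openin_open_subtopology[OF Uo] by blast+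
        let ?S' = "{g. (a, g) \<in> S}"
        have S'o: "openin Tx ?S'" using S(1) a by (simp add: openin_Lam)
        have S'W: "?S' \<subseteq> W" using S(2) by auto
        have Seq: "S = {a} \<times> ?S'" using S(2) by auto
        have "?s ` S = {1} \<times> (\<lambda>x. x [^] a) ` ?S'" by (subst Seq) (rule s_image)
        then have "openin ?T (?s ` S)" using openin_Lam_Times[OF one_Nx pow_open[OF a S'o]] by simp
        moreover have "?s ` S \<subseteq> ?s ` ?U" using S(2) by auto
        ultimately show "openin (subtopology ?T (?s ` ?U)) (?s ` S)"
          using openin_open_subtopology[OF sUo] by blast
      qed
    qed
  qed
qed

lemma pow1: "x \<in> carrier G \<Longrightarrow> x [^] (1::nat) = x"
  using nat_pow_Suc[of x 0] by simp

lemma C_elim: "((a,g),(b,h)) \<in> composable (Lam_top Tx) Lam_r (Lam_s G) \<longleftrightarrow>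
   a \<in> Nx \<and> b \<in> Nx \<and> g \<in> carrier G \<and> h \<in> carrier G \<and> h = g [^] a"
  by (auto simp: composable_def topT s_simp r_simp)

lemma d_cont: "continuous_map (Lam_top Tx) (discrete_topology Nx) Lam_d"
  unfolding Lam_d_def Lam_top_def by (rule continuous_map_fst)

lemma cont_cmp:
  "continuous_map (subtopology (prod_topology (Lam_top Tx) (Lam_top Tx)) (composable (Lam_top Tx) Lam_r (Lam_s G)))
     (Lam_top Tx) (\<lambda>(l, m). Lam_comp l m)"
proof -
  let ?P = "prod_topology (Lam_top Tx) (Lam_top Tx)"
  have d': "continuous_map (Lam_top Tx) (discrete_topology Nx) fst" using d_cont by (simp add: Lam_d_def)
  have A: "continuous_map ?P (discrete_topology (Nx \<times> Nx)) (\<lambda>p. (fst (fst p), fst (snd p)))"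
    unfolding prod_topology_discrete_topology
    by (intro continuous_map_pairedI continuous_map_compose[OF continuous_map_fst d', unfolded o_def]
        continuous_map_compose[OF continuous_map_snd d', unfolded o_def])
  have B: "continuous_map (discrete_topology (Nx \<times> Nx)) (discrete_topology Nx) (\<lambda>(x, y). x * y)"
    by (auto simp: Nx_mult)
  have f1: "continuous_map ?P (discrete_topology Nx) (\<lambda>p. fst (fst p) * fst (snd p))"
    using continuous_map_compose[OF A B] by (simp add: o_def)
  have s': "continuous_map (Lam_top Tx) Tx snd" unfolding Lam_top_def by (rule continuous_map_snd)
  have f2: "continuous_map ?P Tx (\<lambda>p. snd (fst p))"
    using continuous_map_compose[OF continuous_map_fst s'] by (simp add: o_def)
  have f: "continuous_map ?P (Lam_top Tx) (\<lambda>p. (fst (fst p) * fst (snd p), snd (fst p)))"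
    using f1 f2 unfolding Lam_top_def by (intro continuous_map_pairedI)
  have eq: "(\<lambda>(l, m). Lam_comp l m) = (\<lambda>p. (fst (fst p) * fst (snd p), snd (fst p)))"
    by (auto simp: Lam_comp_def fun_eq_iff case_prod_unfold)
  show ?thesis unfolding eq by (rule continuous_map_from_subtopology[OF f])
qed

lemma open_cmp:
  "open_map (subtopology (prod_topology (Lam_top Tx) (Lam_top Tx)) (composable (Lam_top Tx) Lam_r (Lam_s G)))
     (Lam_top Tx) (\<lambda>(l, m). Lam_comp l m)"
  unfolding open_map_def
proof (intro allI impI)
  let ?T = "Lam_top Tx" and ?C = "composable (Lam_top Tx) Lam_r (Lam_s G)"
  let ?c = "\<lambda>(l, m). Lam_comp l m"
  fix W assume "openin (subtopology (prod_topology ?T ?T) ?C) W"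
  then obtain Op where Op: "openin (prod_topology ?T ?T) Op" "W = Op \<inter> ?C" by (auto simp: openin_subtopology)
  show "openin ?T (?c ` W)"
  proof (rule openin_subopen[THEN iffD2], rule ballI)
    fix p assume "p \<in> ?c ` W"
    then obtain w where w: "w \<in> W" "p = ?c w" by blast
    obtain l m where lm: "w = (l, m)" by (cases w)
    obtain a g where ag: "l = (a, g)" by (cases l)
    obtain b h where bh: "m = (b, h)" by (cases m)
    have wO: "((a,g),(b,h)) \<in> Op" and wC: "((a,g),(b,h)) \<in> ?C" using w(1) Op(2) lm ag bh by auto
    then have abg: "a \<in> Nx" "b \<in> Nx" "g \<in> carrier G" "h = g [^] a" by (simp_all add: C_elim)
    have p: "p = (a * b, g)" using w(2) lm ag bh by (simp add: c_simp)
    obtain U V where UV: "openin ?T U" "openin ?T V" "(a,g) \<in> U" "(b,h) \<in> V" "U \<times> V \<subseteq> Op"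
      using Op(1)[unfolded openin_prod_topology_alt, rule_format, OF wO] by auto
    have Uao: "openin Tx {x. (a,x) \<in> U}" using UV(1) abg(1) by (simp add: openin_Lam)
    have Vbo: "openin Tx {x. (b,x) \<in> V}" using UV(2) abg(2) by (simp add: openin_Lam)
    define N where "N = {x. (a,x) \<in> U} \<inter> {x \<in> topspace Tx. x [^] a \<in> {x. (b,x) \<in> V}}"
    have No: "openin Tx N" unfolding N_def
      by (intro openin_Int Uao openin_continuous_map_preimage[OF cont_pow Vbo])
    show "\<exists>T'. openin ?T T' \<and> p \<in> T' \<and> T' \<subseteq> ?c ` W"
    proof (intro exI[of _ "{a * b} \<times> N"] conjI)
      show "openin ?T ({a * b} \<times> N)" by (rule openin_Lam_Times[OF Nx_mult[OF abg(1,2)] No])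
      show "p \<in> {a * b} \<times> N" using p UV(3,4) abg by (simp add: N_def top)
      show "{a * b} \<times> N \<subseteq> ?c ` W"
      proof (rule subsetI)
        fix q assume "q \<in> {a * b} \<times> N"
        then obtain x where x: "q = (a * b, x)" "x \<in> N" by blast
        have xc: "x \<in> carrier G" using x(2) by (simp add: N_def top)
        have "((a,x),(b,x [^] a)) \<in> U \<times> V" using x(2) by (simp add: N_def)
        then have "((a,x),(b,x [^] a)) \<in> Op" using UV(5) by blast
        moreover have "((a,x),(b,x [^] a)) \<in> ?C" using abg xc by (simp add: C_elim)
        ultimately have "((a,x),(b,x [^] a)) \<in> W" using Op(2) by simp
        moreover have "q = ?c ((a,x),(b,x [^] a))" using x(1) by (simp add: c_simp)
        ultimately show "q \<in> ?c ` W" by (rule rev_image_eqI)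
      qed
    qed
  qed
qed

lemma main:
  "topological_Nx_graph (Lam_top Tx) Lam_r (Lam_s G) Lam_comp Lam_d \<and>
   row_finite_no_sources (Lam_top Tx) Lam_r Lam_d"
proof -
  let ?T = "Lam_top Tx" and ?Ob = "{1::nat} \<times> carrier G"
  let ?C = "composable (Lam_top Tx) Lam_r (Lam_s G)" and ?L = "topspace (Lam_top Tx)"
  have h1: "\<forall>l\<in>?L. Lam_r l \<in> ?Ob \<and> Lam_s G l \<in> ?Ob"
    by (auto simp: topT r_simp s_simp)
  have h2: "\<forall>v\<in>?Ob. Lam_r v = v \<and> Lam_s G v = v"
    by (auto simp: r_simp s_simp pow1)
  have h3: "\<forall>(l, m)\<in>?C. Lam_comp l m \<in> ?L \<and> Lam_r (Lam_comp l m) = Lam_r l \<and> Lam_s G (Lam_comp l m) = Lam_s G m"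
    by (auto simp: C_elim c_simp s_simp r_simp nat_pow_pow Nx_mult topT)
  have h4: "\<forall>l\<in>?L. Lam_comp (Lam_r l) l = l \<and> Lam_comp l (Lam_s G l) = l"
    by (auto simp: topT c_simp s_simp r_simp)
  have h5: "\<forall>l\<in>?L. \<forall>m\<in>?L. \<forall>n\<in>?L. Lam_s G l = Lam_r m \<and> Lam_s G m = Lam_r n \<longrightarrow>
          Lam_comp (Lam_comp l m) n = Lam_comp l (Lam_comp m n)"
    by (auto simp: topT c_simp mult.assoc)
  have h6: "\<forall>l\<in>?L. Lam_d l \<in> Nx" by (auto simp: topT Lam_d_def)
  have h7: "\<forall>(l, m)\<in>?C. Lam_d (Lam_comp l m) = Lam_d l * Lam_d m"
    by (simp add: Lam_comp_def Lam_d_def split_beta)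
  have h8: "Hausdorff_space (subtopology ?T ?Ob)" by (rule Hausdorff_space_subtopology[OF hausT])
  have h9: "locally_compact_space (subtopology ?T ?Ob)"
    by (rule compact_imp_locally_compact_space[OF compact_space_subtopology[OF compact_slice[OF one_Nx]]])
  have h10: "continuous_map ?T (subtopology ?T ?Ob) Lam_r"
    by (rule continuous_map_into_subtopology[OF cont_r]) (auto simp: topT Lam_r_def)
  have h12: "\<forall>l\<in>?L. \<forall>a\<in>Nx. \<forall>b\<in>Nx. Lam_d l = a * b \<longrightarrow>
        (\<exists>!(m, n). (m, n) \<in> ?C \<and> Lam_d m = a \<and> Lam_d n = b \<and> l = Lam_comp m n)"
  proof (intro ballI impI)
    fix l a b assume l: "l \<in> ?L" and a: "a \<in> Nx" and b: "b \<in> Nx" and d: "Lam_d l = a * b"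
    obtain c g where cg: "l = (c, g)" "g \<in> carrier G" "c = a * b" using l d by (auto simp: topT Lam_d_def)
    show "\<exists>!(m, n). (m, n) \<in> ?C \<and> Lam_d m = a \<and> Lam_d n = b \<and> l = Lam_comp m n"
    proof (rule ex1I[of _ "((a, g), (b, g [^] a))"])
      show "case ((a, g), (b, g [^] a)) of (m, n) \<Rightarrow> (m, n) \<in> ?C \<and> Lam_d m = a \<and> Lam_d n = b \<and> l = Lam_comp m n"
        using a b cg by (simp add: C_elim Lam_d_def c_simp)
    next
      fix p assume p: "case p of (m, n) \<Rightarrow> (m, n) \<in> ?C \<and> Lam_d m = a \<and> Lam_d n = b \<and> l = Lam_comp m n"
      obtain a' g' b' h' where pp: "p = ((a', g'), (b', h'))" by (cases p) auto
      have e: "((a',g'),(b',h')) \<in> ?C" "Lam_d (a',g') = a" "Lam_d (b',h') = b" "l = Lam_comp (a',g') (b',h')"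
        using p unfolding pp by simp_all
      have e2: "a' = a" "b' = b" using e(2,3) by (simp_all add: Lam_d_def)
      have "g' = g" using e(4) cg(1) by (simp add: c_simp)
      moreover have "h' = g' [^] a'" using e(1) by (simp add: C_elim)
      ultimately show "p = ((a, g), (b, g [^] a))" by (simp add: pp e2)
    qed
  qed
  have rf: "\<forall>a\<in>Nx. proper_map (subtopology ?T {l \<in> ?L. Lam_d l = a}) (subtopology ?T ?Ob) Lam_r \<and>
              Lam_r ` {l \<in> ?L. Lam_d l = a} = ?Ob"
  proof (rule ballI)
    fix a assume a: "a \<in> Nx"
    have eq: "{l \<in> ?L. Lam_d l = a} = {a} \<times> carrier G"
    proof
      show "{l \<in> ?L. Lam_d l = a} \<subseteq> {a} \<times> carrier G" by (auto simp: topT Lam_d_def)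
      show "{a} \<times> carrier G \<subseteq> {l \<in> ?L. Lam_d l = a}" using a by (auto simp: topT Lam_d_def)
    qed
    show "proper_map (subtopology ?T {l \<in> ?L. Lam_d l = a}) (subtopology ?T ?Ob) Lam_r \<and>
              Lam_r ` {l \<in> ?L. Lam_d l = a} = ?Ob"
      unfolding eq
    proof
      show "proper_map (subtopology ?T ({a} \<times> carrier G)) (subtopology ?T ?Ob) Lam_r"
        by (intro continuous_imp_proper_map compact_space_subtopology compact_slice a
            Hausdorff_imp_kc_space h8 continuous_map_from_subtopology h10)
      show "Lam_r ` ({a} \<times> carrier G) = ?Ob"
      proof
        show "Lam_r ` ({a} \<times> carrier G) \<subseteq> ?Ob" by (auto simp: r_simp)
        show "?Ob \<subseteq> Lam_r ` ({a} \<times> carrier G)"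
        proof (rule subsetI)
          fix p :: "nat \<times> 'g" assume "p \<in> ?Ob"
          then obtain g where g: "p = (1, g)" "g \<in> carrier G" by blast
          then have "p = Lam_r (a, g)" by (simp add: r_simp)
          moreover have "(a, g) \<in> {a} \<times> carrier G" using g by simp
          ultimately show "p \<in> Lam_r ` ({a} \<times> carrier G)" by (rule image_eqI)
        qed
      qed
    qed
  qed
  have tg: "topological_Nx_graph ?T Lam_r (Lam_s G) Lam_comp Lam_d"
    unfolding topological_Nx_graph_def Let_def Ob_eq
    by (intro conjI h1 h2 h3 h4 h5 h6 h7 hausT lcT h8 h9 h10 local_homeo_s d_cont cont_cmp open_cmp h12)
  have rfn: "row_finite_no_sources ?T Lam_r Lam_d"
    unfolding row_finite_no_sources_def Ob_eq by (rule rf)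
  show ?thesis using tg rfn by blast
qed

end

theorem proposition3p2:
  fixes G :: "('g, 'b) monoid_scheme" and Tx :: "'g topology"
  assumes "comm_group G"
    and "topspace Tx = carrier G"
    and "compact_space Tx" and "Hausdorff_space Tx"
    and "continuous_map (prod_topology Tx Tx) Tx (\<lambda>(x, y). x \<otimes>\<^bsub>G\<^esub> y)"
    and "continuous_map Tx Tx (\<lambda>x. inv\<^bsub>G\<^esub> x)"
    and "\<And>a. a \<in> Nx \<Longrightarrow> finite (rcosets\<^bsub>G\<^esub> (pow_image G a))"
    and "\<And>a. a \<in> Nx \<Longrightarrow> finite (pow_ker G a)"
    and "\<And>a b. a \<in> Nx \<Longrightarrow> b \<in> Nx \<Longrightarrow>
           card (pow_ker G (a * b)) = card (pow_ker G a) * card (pow_ker G b)"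
  shows "topological_Nx_graph (Lam_top Tx) Lam_r (Lam_s G) Lam_comp Lam_d \<and>
         row_finite_no_sources (Lam_top Tx) Lam_r Lam_d"
proof -
  have "tgrp G Tx"
    unfolding tgrp_def tgrp_axioms_def using assms by blast
  then show ?thesis by (rule tgrp.main)
qed

end
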